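(* Let $k\ge1$ and let $G$ be a finite $k$-connected graph with $|V_G|\ge k+1$. If $\mathrm{Ent}(G)=k$, then $\mathrm{Cycl}(G)=\mathrm{Ent}(G)=k$.
   Context: Graphs are finite and undirected. A graph is $k$-connected if one must remove at least $k$ vertices to disconnect it (by convention $K_m$, $m\ge3$, has connectivity $m-1$). $\mathrm{Cycl}(G)$ (cyclicity) is the minimum size of a feedback vertex set of the symmetric digraph of $G$ (each edge viewed as two opposite arcs); equivalently the minimum size of a set of vertices containing an endpoint of every edge. Entanglement: in the game $\mathrm{Ent}(G,k)$ Thief plays against $k$ cops. Initially no cop is placed and Thief picks a vertex. Each round, Cops may do nothing, place a new cop (at most $k$ in total) on Thief's current vertex, or move a placed cop to Thief's current vertex; then Thief must move along an edge to an adjacent vertex not occupied by a cop, and is caught if he cannot. Infinite plays are won by Thief. $\mathrm{Ent}(G)$ is the least $k$ for which Cops have a winning strategy. *)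

theory Defs
  imports Main
begin

definition graph :: "'a set \<Rightarrow> ('a \<Rightarrow> 'a \<Rightarrow> bool) \<Rightarrow> bool" where
  "graph V E \<longleftrightarrow> finite V \<and>
     (\<forall>u v. E u v \<longrightarrow> u \<in> V \<and> v \<in> V \<and> u \<noteq> v \<and> E v u)"

definition induced :: "'a set \<Rightarrow> ('a \<Rightarrow> 'a \<Rightarrow> bool) \<Rightarrow> 'a \<Rightarrow> 'a \<Rightarrow> bool" where
  "induced W E = (\<lambda>x y. E x y \<and> x \<in> W \<and> y \<in> W)"

definition connected_graph :: "'a set \<Rightarrow> ('a \<Rightarrow> 'a \<Rightarrow> bool) \<Rightarrow> bool" where
  "connected_graph V E \<longleftrightarrow> V \<noteq> {} \<and>
     (\<forall>u\<in>V. \<forall>v\<in>V. (induced V E)\<^sup>*\<^sup>* u v)"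

text \<open>k-connected: more than k vertices, and removing fewer than k vertices
  leaves a connected graph (so K_m has connectivity m-1).\<close>
definition k_connected :: "nat \<Rightarrow> 'a set \<Rightarrow> ('a \<Rightarrow> 'a \<Rightarrow> bool) \<Rightarrow> bool" where
  "k_connected k V E \<longleftrightarrow> card V > k \<and>
     (\<forall>S. S \<subseteq> V \<and> card S < k \<longrightarrow> connected_graph (V - S) (induced (V - S) E))"

text \<open>Feedback vertex set of the symmetric digraph of G (each edge = two
  opposite arcs): removing S leaves no directed cycle.\<close>
definition feedback_vertex_set :: "'a set \<Rightarrow> ('a \<Rightarrow> 'a \<Rightarrow> bool) \<Rightarrow> 'a set \<Rightarrow> bool" where
  "feedback_vertex_set V E S \<longleftrightarrow> S \<subseteq> V \<and>
     \<not> (\<exists>v. (induced (V - S) E)\<^sup>+\<^sup>+ v v)"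

definition cycl :: "'a set \<Rightarrow> ('a \<Rightarrow> 'a \<Rightarrow> bool) \<Rightarrow> nat" where
  "cycl V E = (LEAST n. \<exists>S. feedback_vertex_set V E S \<and> card S = n)"

definition cop_move :: "nat \<Rightarrow> 'a \<Rightarrow> 'a set \<Rightarrow> 'a set \<Rightarrow> bool" where
  "cop_move k v C C' \<longleftrightarrow>
     C' = C \<or> (card C < k \<and> C' = insert v C) \<or> (\<exists>c\<in>C. C' = insert v (C - {c}))"

text \<open>A Cops' strategy maps the history of Thief positions v_0 ... v_i to the
  cop positions after the Cops' move in round i ([] gives the initial empty
  placement). It must always prescribe legal moves.\<close>
definition legal_cop_strategy :: "nat \<Rightarrow> 'a set \<Rightarrow> ('a list \<Rightarrow> 'a set) \<Rightarrow> bool" where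
  "legal_cop_strategy k V \<sigma> \<longleftrightarrow> \<sigma> [] = {} \<and>
     (\<forall>xs v. v \<in> V \<and> v \<notin> \<sigma> xs \<longrightarrow> cop_move k v (\<sigma> xs) (\<sigma> (xs @ [v])))"

definition thief_escapes :: "'a set \<Rightarrow> ('a \<Rightarrow> 'a \<Rightarrow> bool) \<Rightarrow> ('a list \<Rightarrow> 'a set) \<Rightarrow> (nat \<Rightarrow> 'a) \<Rightarrow> bool" where
  "thief_escapes V E \<sigma> f \<longleftrightarrow> f 0 \<in> V \<and>
     (\<forall>i. E (f i) (f (Suc i)) \<and> f (Suc i) \<notin> \<sigma> (map f [0..<Suc i]))"

definition cops_win :: "nat \<Rightarrow> 'a set \<Rightarrow> ('a \<Rightarrow> 'a \<Rightarrow> bool) \<Rightarrow> bool" where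
  "cops_win k V E \<longleftrightarrow>
     (\<exists>\<sigma>. legal_cop_strategy k V \<sigma> \<and> (\<forall>f. \<not> thief_escapes V E \<sigma> f))"

definition ent :: "'a set \<Rightarrow> ('a \<Rightarrow> 'a \<Rightarrow> bool) \<Rightarrow> nat" where
  "ent V E = (LEAST k. cops_win k V E)"

end

theory Submission
  imports Defs
begin

lemma edge_of_nonfvs:
  assumes "S \<subseteq> V" "\<not> feedback_vertex_set V E S"
  shows "\<exists>a b. E a b \<and> a \<in> V - S \<and> b \<in> V - S"
proof -
  from assms obtain v where "(induced (V - S) E)\<^sup>+\<^sup>+ v v"
    unfolding feedback_vertex_set_def by blast
  then obtain c where "induced (V - S) E v c" by (metis tranclpD)
  then show ?thesis unfolding induced_def by blast
qed

lemma cop_move_card: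
  assumes "finite C" "card C \<le> k" "cop_move k v C C'"
  shows "finite C' \<and> card C' \<le> k \<and> (C' = C \<or> v \<in> C')"
proof -
  from assms(3) consider "C' = C" | "card C < k \<and> C' = insert v C"
    | c where "c \<in> C" "C' = insert v (C - {c})"
    unfolding cop_move_def by blast
  then show ?thesis
  proof cases
    case 1 then show ?thesis using assms by simp
  next
    case 2 then show ?thesis using assms by (simp add: card_insert_if)
  next
    case 3
    have a1: "card (insert v (C - {c})) \<le> Suc (card (C - {c}))" using assms(1) by (simp add: card_insert_if)
    have a2: "card (C - {c}) = card C - 1" using 3 by (simp add: card_Diff_singleton)
    have a3: "card C > 0" using 3 assms(1) card_gt_0_iff by blast
    have "card (insert v (C - {c})) \<le> card C" using a1 a2 a3 by linarith
    then show ?thesis using 3 assms by simp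
  qed
qed

lemma key_step:
  assumes g: "graph V E" and kc: "k_connected k V E"
    and nosmall: "\<forall>S. S \<subseteq> V \<and> card S \<le> k \<longrightarrow> \<not> feedback_vertex_set V E S"
    and xV: "x \<in> V" and fin: "finite C'" and cardC: "card C' \<le> k" and xC: "x \<in> C'"
  shows "\<exists>y. E x y \<and> y \<notin> C' \<and> (\<exists>z. E y z \<and> z \<notin> C')"
proof (rule ccontr)
  assume H: "\<not> ?thesis"
  have "C' \<inter> V \<subseteq> V" by blast
  moreover have "card (C' \<inter> V) \<le> k" using fin cardC by (meson card_mono inf_le1 le_trans)
  ultimately obtain a b where ab: "E a b" "a \<in> V - (C' \<inter> V)" "b \<in> V - (C' \<inter> V)"
    using nosmall edge_of_nonfvs by metis
  define S where "S = (C' \<inter> V) - {x}"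
  have "card S < k"
  proof -
    have "card S = card (C' \<inter> V) - 1" unfolding S_def using xC xV fin by (simp add: card_Diff_singleton)
    moreover have "card (C' \<inter> V) \<ge> 1" using xC xV fin by (metis IntI card_0_eq finite_Int empty_iff less_one not_le)
    ultimately show ?thesis using \<open>card (C' \<inter> V) \<le> k\<close> by linarith
  qed
  moreover have "S \<subseteq> V" unfolding S_def by blast
  ultimately have conn: "connected_graph (V - S) (induced (V - S) E)"
    using kc unfolding k_connected_def by blast
  have xS: "x \<in> V - S" using xV unfolding S_def by blast
  have aS: "a \<in> V - S" using ab unfolding S_def by blast
  have reach: "(induced (V - S) (induced (V - S) E))\<^sup>*\<^sup>* x a"
    using conn xS aS unfolding connected_graph_def by blast
  have "\<And>w. (induced (V - S) (induced (V - S) E))\<^sup>*\<^sup>* x w \<Longrightarrow> w = x \<or> (E x w \<and> w \<notin> C')"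
  proof -
    fix w assume "(induced (V - S) (induced (V - S) E))\<^sup>*\<^sup>* x w"
    then show "w = x \<or> (E x w \<and> w \<notin> C')"
    proof (induction rule: rtranclp_induct)
      case base then show ?case by simp
    next
      case (step y w)
      from step.hyps(2) have Eyw: "E y w" and wS: "w \<in> V - S"
        unfolding induced_def by auto
      from step.IH show ?case
      proof
        assume "y = x"
        then have "w \<noteq> x" using Eyw g unfolding graph_def by blast
        then show ?thesis using wS Eyw \<open>y = x\<close> unfolding S_def by blast
      next
        assume "E x y \<and> y \<notin> C'"
        then have "w \<in> C'" using H Eyw by blast
        then show ?thesis using wS unfolding S_def by blast
      qed
    qed
  qed
  from this[OF reach] have "a = x \<or> (E x a \<and> a \<notin> C')" .
  then show False using ab xC H by blast
qed

lemma play_exists: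
  "\<exists>f. f 0 = a \<and> (\<forall>i. f (Suc i) = ch (f i) (\<sigma> (map f [0..<Suc i])))"
proof -
  define h where "h = rec_nat [a] (\<lambda>n xs. xs @ [ch (last xs) (\<sigma> xs)])"
  have h0: "h 0 = [a]" and hS: "\<And>n. h (Suc n) = h n @ [ch (last (h n)) (\<sigma> (h n))]"
    unfolding h_def by simp_all
  define f where "f i = last (h i)" for i
  have hf: "h n = map f [0..<Suc n]" for n
  proof (induction n)
    case 0 then show ?case using h0 f_def by simp
  next
    case (Suc n)
    have "h (Suc n) = h n @ [f (Suc n)]" using hS f_def by simp
    then show ?case using Suc by simp
  qed
  have "f (Suc i) = ch (f i) (\<sigma> (map f [0..<Suc i]))" for i
  proof -
    have "f (Suc i) = ch (last (h i)) (\<sigma> (h i))" unfolding f_def hS by simp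
    also have "last (h i) = f i" unfolding f_def by simp
    also have "h i = map f [0..<Suc i]" by (rule hf)
    finally show ?thesis .
  qed
  moreover have "f 0 = a" using h0 f_def by simp
  ultimately show ?thesis by blast
qed

lemma thief_wins:
  assumes g: "graph V E" and kc: "k_connected k V E"
    and nosmall: "\<forall>S. S \<subseteq> V \<and> card S \<le> k \<longrightarrow> \<not> feedback_vertex_set V E S"
  shows "\<not> cops_win k V E"
proof
  assume "cops_win k V E"
  then obtain \<sigma> where leg: "legal_cop_strategy k V \<sigma>" and nf: "\<forall>f. \<not> thief_escapes V E \<sigma> f"
    unfolding cops_win_def by blast
  have "\<not> feedback_vertex_set V E {}" using nosmall by simp
  then obtain a b where ab0: "E a b" "a \<in> V - {}" "b \<in> V - {}"
    using edge_of_nonfvs[of "{}" V E] by blast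
  then have ab: "E a b" "a \<in> V" "b \<in> V" by auto
  define ch where "ch x C = (SOME y. E x y \<and> y \<notin> C \<and> (\<exists>z. E y z \<and> z \<notin> C))" for x C
  from play_exists[of a ch \<sigma>] obtain f where f0: "f 0 = a"
    and fS0: "\<forall>i. f (Suc i) = ch (f i) (\<sigma> (map f [0..<Suc i]))"
    by (elim exE conjE)
  have fS: "f (Suc i) = ch (f i) (\<sigma> (map f [0..<Suc i]))" for i using fS0 by simp
  have s0: "\<sigma> [] = {}" using leg unfolding legal_cop_strategy_def by blast
  define I where "I i = (f i \<in> V \<and> f i \<notin> \<sigma> (map f [0..<i]) \<and> finite (\<sigma> (map f [0..<i]))
      \<and> card (\<sigma> (map f [0..<i])) \<le> k \<and> (\<exists>z. E (f i) z \<and> z \<notin> \<sigma> (map f [0..<i])))" for i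
  have stp: "E (f i) (f (Suc i)) \<and> I (Suc i)" if Ii: "I i" for i
  proof -
    note Suc = Ii[unfolded I_def]
    define C where "C = \<sigma> (map f [0..<i])"
    define C' where "C' = \<sigma> (map f [0..<Suc i])"
    have "C' = \<sigma> (map f [0..<i] @ [f i])" unfolding C'_def by simp
    moreover have "cop_move k (f i) (\<sigma> (map f [0..<i])) (\<sigma> (map f [0..<i] @ [f i]))"
      using leg Suc unfolding legal_cop_strategy_def by blast
    ultimately have mv: "cop_move k (f i) C C'" unfolding C_def by simp
    have cc: "finite C' \<and> card C' \<le> k \<and> (C' = C \<or> f i \<in> C')"
      using cop_move_card[OF _ _ mv] Suc unfolding C_def by blast
    have ex: "\<exists>y. E (f i) y \<and> y \<notin> C' \<and> (\<exists>z. E y z \<and> z \<notin> C')"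
    proof (cases "C' = C")
      case True
      from Suc obtain z where "E (f i) z" "z \<notin> C" unfolding C_def by blast
      moreover have "E z (f i)" using \<open>E (f i) z\<close> g unfolding graph_def by blast
      ultimately show ?thesis using True Suc unfolding C_def by blast
    next
      case False
      then have "f i \<in> C'" using cc by blast
      then show ?thesis using key_step[OF g kc nosmall] Suc cc by blast
    qed
    have fy: "E (f i) (f (Suc i)) \<and> f (Suc i) \<notin> C' \<and> (\<exists>z. E (f (Suc i)) z \<and> z \<notin> C')"
      unfolding fS ch_def C'_def[symmetric] using someI_ex[OF ex] by simp
    then have "f (Suc i) \<in> V" using g unfolding graph_def by blast
    then show ?thesis using fy cc unfolding C'_def I_def by blast
  qed
  have inv: "I i" for i
  proof (induction i)
    case 0 then show ?case using f0 ab s0 unfolding I_def by auto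
  next
    case (Suc i) then show ?case using stp by blast
  qed
  have all: "\<forall>i. E (f i) (f (Suc i)) \<and> f (Suc i) \<notin> \<sigma> (map f [0..<Suc i])"
  proof
    fix i
    show "E (f i) (f (Suc i)) \<and> f (Suc i) \<notin> \<sigma> (map f [0..<Suc i])"
      using stp[OF inv[of i]] unfolding I_def by simp
  qed
  have "f 0 \<in> V" using inv[of 0] unfolding I_def by simp
  then have "thief_escapes V E \<sigma> f" using all unfolding thief_escapes_def by blast
  then show False using nf by blast
qed

lemma cops_win_all:
  assumes g: "graph V E"
  shows "cops_win (card V) V E"
proof -
  define \<sigma> where "\<sigma> xs = set xs \<inter> V" for xs :: "'a list"
  have fin: "finite V" using g unfolding graph_def by blast
  have leg: "legal_cop_strategy (card V) V \<sigma>"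
    unfolding legal_cop_strategy_def
  proof (intro conjI allI impI)
    show "\<sigma> [] = {}" unfolding \<sigma>_def by simp
  next
    fix xs v assume H: "v \<in> V \<and> v \<notin> \<sigma> xs"
    have "\<sigma> xs \<subset> V" using H unfolding \<sigma>_def by blast
    then have "card (\<sigma> xs) < card V" using fin by (simp add: psubset_card_mono)
    moreover have "\<sigma> (xs @ [v]) = insert v (\<sigma> xs)" using H unfolding \<sigma>_def by auto
    ultimately show "cop_move (card V) v (\<sigma> xs) (\<sigma> (xs @ [v]))" unfolding cop_move_def by blast
  qed
  have "\<not> thief_escapes V E \<sigma> f" for f
  proof
    assume T: "thief_escapes V E \<sigma> f"
    have inV: "f i \<in> V" for i
    proof (cases i)
      case 0 then show ?thesis using T unfolding thief_escapes_def by simp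
    next
      case (Suc j) then show ?thesis using T g unfolding thief_escapes_def graph_def by blast
    qed
    have neq: "f j \<noteq> f i" if ji: "j < i" for i j
    proof -
      obtain i' where i': "i = Suc i'" using ji by (cases i) auto
      have "j \<in> {0..<Suc i'}" using ji i' by simp
      then have "f j \<in> set (map f [0..<Suc i'])" by (simp only: set_map set_upt) blast
      then have "f j \<in> \<sigma> (map f [0..<Suc i'])" using inV unfolding \<sigma>_def by blast
      moreover have "f (Suc i') \<notin> \<sigma> (map f [0..<Suc i'])" using T unfolding thief_escapes_def by blast
      ultimately show ?thesis using i' by auto
    qed
    have "inj f"
    proof (rule injI)
      fix x y assume "f x = f y"
      then show "x = y" using neq[of x y] neq[of y x] by (metis linorder_neqE_nat)
    qed
    moreover have "finite (range f)" using inV fin by (meson finite_subset image_subsetI)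
    ultimately have "finite (UNIV :: nat set)" using finite_imageD by blast
    then show False by simp
  qed
  then show ?thesis using leg unfolding cops_win_def by blast
qed

theorem mainTheorem8:
  fixes V :: "'a set" and E :: "'a \<Rightarrow> 'a \<Rightarrow> bool" and k :: nat
  assumes "k \<ge> 1"
    and "graph V E"
    and "k_connected k V E"
    and "card V \<ge> k + 1"
    and "ent V E = k"
  shows "cycl V E = ent V E \<and> ent V E = k"
proof -
  have g: "graph V E" and kc: "k_connected k V E" using assms by auto
  have fin: "finite V" using g unfolding graph_def by blast
  have "cops_win (ent V E) V E"
    unfolding ent_def by (rule LeastI_ex) (use cops_win_all[OF g] in blast)
  then have cw: "cops_win k V E" using assms(5) by simp
  have Vfvs: "feedback_vertex_set V E V"
    unfolding feedback_vertex_set_def induced_def by (auto dest: tranclpD)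
  have le: "cycl V E \<le> k"
  proof (rule ccontr)
    assume "\<not> cycl V E \<le> k"
    then have gt: "cycl V E > k" by simp
    have "\<forall>S. S \<subseteq> V \<and> card S \<le> k \<longrightarrow> \<not> feedback_vertex_set V E S"
    proof (intro allI impI notI)
      fix S assume S: "S \<subseteq> V \<and> card S \<le> k" and F: "feedback_vertex_set V E S"
      have "cycl V E \<le> card S" unfolding cycl_def by (rule Least_le) (use F in blast)
      then show False using S gt by simp
    qed
    then show False using thief_wins[OF g kc] cw by blast
  qed
  have ge: "cycl V E \<ge> k"
  proof -
    have "\<exists>S. feedback_vertex_set V E S \<and> card S = cycl V E"
      unfolding cycl_def by (rule LeastI_ex) (use Vfvs in blast)
    then obtain S where F: "feedback_vertex_set V E S" and cS: "card S = cycl V E" by blast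
    have SV: "S \<subseteq> V" using F unfolding feedback_vertex_set_def by blast
    show ?thesis
    proof (rule ccontr)
      assume "\<not> k \<le> cycl V E"
      then have lt: "card S < k" using cS by simp
      then have conn: "connected_graph (V - S) (induced (V - S) E)"
        using kc SV unfolding k_connected_def by blast
      have "card (V - S) = card V - card S" using SV fin by (simp add: card_Diff_subset finite_subset)
      then have "card (V - S) \<ge> 2" using lt assms(4) by linarith
      moreover have finVS: "finite (V - S)" using fin by simp
      ultimately have "\<not> (\<forall>a1\<in>V - S. \<forall>a2\<in>V - S. a1 = a2)"
        using card_le_Suc0_iff_eq[OF finVS] by simp
      then obtain u v where uv: "u \<in> V - S" "v \<in> V - S" "u \<noteq> v" by blast
      then have "(induced (V - S) (induced (V - S) E))\<^sup>*\<^sup>* u v"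
        using conn unfolding connected_graph_def by blast
      then obtain w where "induced (V - S) (induced (V - S) E) u w"
        using uv(3) by (metis converse_rtranclpE)
      then have uw: "induced (V - S) E u w" and wu: "induced (V - S) E w u"
        using g unfolding induced_def graph_def by auto
      then have "(induced (V - S) E)\<^sup>+\<^sup>+ u u" by (meson tranclp.r_into_trancl tranclp.trancl_into_trancl)
      then show False using F unfolding feedback_vertex_set_def by blast
    qed
  qed
  show ?thesis using le ge assms(5) by simp
qed

end
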